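(* Let $G$ be a persistent graph with vertex order $<$, let $k\ge 4$, and let $p_1,\dots,p_k\in V(G)$ form an induced cycle in this order (edges $\{p_i,p_{i+1}\}$ and $\{p_k,p_1\}$). Then, after possibly cyclically shifting the indices and/or reversing the cyclic order of the indices, $p_1>p_3>p_4>\dots>p_k>p_2$.
   Context: A persistent graph is a graph $G$ together with a linear order $v_1<v_2<\dots<v_n$ on $V(G)$ such that (1) $\{v_i,v_{i+1}\}\in E(G)$ for all $i$ (a Hamiltonian path following the order); (2) X-property: for all $p<q<r<s$, if $\{p,r\}\in E(G)$ and $\{q,s\}\in E(G)$ then $\{p,s\}\in E(G)$; (3) bar-property: if $\{p,q\}\in E(G)$ and $p,q$ are not consecutive in the order, then there is a vertex $r$ with $p<r<q$ adjacent to both $p$ and $q$. *)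

theory Defs
  imports Main
begin

text \<open>A finite simple graph on a vertex set V of a linearly ordered type; the vertex
order of the persistent graph is the order of the type restricted to V.\<close>

definition simple_graph :: "'a set \<Rightarrow> ('a \<Rightarrow> 'a \<Rightarrow> bool) \<Rightarrow> bool" where
  "simple_graph V E \<longleftrightarrow> finite V \<and>
     (\<forall>x y. E x y \<longrightarrow> x \<in> V \<and> y \<in> V) \<and>
     (\<forall>x y. E x y \<longrightarrow> E y x) \<and> (\<forall>x. \<not> E x x)"

definition consecutive :: "'a::linorder set \<Rightarrow> 'a \<Rightarrow> 'a \<Rightarrow> bool" where
  "consecutive V u w \<longleftrightarrow> u \<in> V \<and> w \<in> V \<and> u < w \<and> \<not> (\<exists>r\<in>V. u < r \<and> r < w)"

definition persistent_graph :: "'a::linorder set \<Rightarrow> ('a \<Rightarrow> 'a \<Rightarrow> bool) \<Rightarrow> bool" where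
  "persistent_graph V E \<longleftrightarrow> simple_graph V E \<and>
     (\<forall>u w. consecutive V u w \<longrightarrow> E u w) \<and>
     (\<forall>p q r s. p \<in> V \<longrightarrow> q \<in> V \<longrightarrow> r \<in> V \<longrightarrow> s \<in> V \<longrightarrow>
        p < q \<longrightarrow> q < r \<longrightarrow> r < s \<longrightarrow> E p r \<longrightarrow> E q s \<longrightarrow> E p s) \<and>
     (\<forall>p q. E p q \<longrightarrow> p < q \<longrightarrow> \<not> consecutive V p q \<longrightarrow>
        (\<exists>r\<in>V. p < r \<and> r < q \<and> E p r \<and> E r q))"

definition induced_cycle :: "'a set \<Rightarrow> ('a \<Rightarrow> 'a \<Rightarrow> bool) \<Rightarrow> nat \<Rightarrow> (nat \<Rightarrow> 'a) \<Rightarrow> bool" where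
  "induced_cycle V E k p \<longleftrightarrow>
     (\<forall>i<k. p i \<in> V) \<and> inj_on p {..<k} \<and>
     (\<forall>i<k. \<forall>j<k. E (p i) (p j) \<longleftrightarrow> (j = (i + 1) mod k \<or> i = (j + 1) mod k))"

definition cyc_reindex :: "nat \<Rightarrow> nat \<Rightarrow> bool \<Rightarrow> (nat \<Rightarrow> 'a) \<Rightarrow> nat \<Rightarrow> 'a" where
  "cyc_reindex k s rv p i = (if rv then p ((s + (k - i mod k)) mod k) else p ((s + i) mod k))"

end

theory Submission imports Defs begin

lemma succ_int:
  fixes a b k :: nat
  assumes "a < k" "b < k"
  shows "(a = (b+1) mod k) \<longleftrightarrow> int k dvd (int a - int b - 1)"
proof -
  have "(a = (b+1) mod k) \<longleftrightarrow> a mod k = (b+1) mod k" using assms by simp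
  also have "\<dots> \<longleftrightarrow> int a mod int k = int (b+1) mod int k"
    by (metis of_nat_eq_iff zmod_int)
  also have "\<dots> \<longleftrightarrow> int k dvd (int a - int (b+1))" by (rule mod_eq_dvd_iff)
  finally show ?thesis by (simp add: algebra_simps)
qed

lemma eq_int:
  fixes a b k :: nat
  assumes "a < k" "b < k" "int k dvd (int a - int b)"
  shows "a = b"
proof -
  have "int a mod int k = int b mod int k" using assms(3) by (simp add: mod_eq_dvd_iff)
  hence "a mod k = b mod k" by (metis of_nat_eq_iff zmod_int)
  thus ?thesis using assms by simp
qed

lemma dvd_shift:
  fixes k X Y X' Y' :: int
  assumes "k dvd (X - X')" "k dvd (Y - Y')"
  shows "k dvd (X - Y - 1) \<longleftrightarrow> k dvd (X' - Y' - 1)"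
proof -
  have "X - Y - 1 = (X' - Y' - 1) + ((X - X') - (Y - Y'))" by simp
  thus ?thesis using assms by (metis dvd_add_left_iff dvd_diff)
qed

lemma reindex_induced:
  assumes ic: "induced_cycle V E k p" and k: "k > 0"
  shows "induced_cycle V E k (cyc_reindex k s rv p)"
proof -
  define f where "f i = (if rv then (s + (k - i mod k)) mod k else (s + i) mod k)" for i
  have cr: "cyc_reindex k s rv p = p \<circ> f" by (auto simp: cyc_reindex_def f_def fun_eq_iff)
  have fk: "f i < k" for i using k by (simp add: f_def)
  have fint: "int k dvd (int (f i) - (if rv then int s - int i else int s + int i))" if "i < k" for i
  proof (cases rv)
    case True
    have "int (f i) = (int s + int k - int i) mod int k" using True that
      by (simp add: f_def zmod_int of_nat_diff)
    moreover have "int k dvd ((int s + int k - int i) mod int k - (int s + int k - int i))"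
      by (simp add: mod_eq_dvd_iff[symmetric])
    moreover have "int (f i) - (int s - int i) = ((int s + int k - int i) mod int k - (int s + int k - int i)) + int k"
      using calculation(1) by simp
    ultimately show ?thesis using True by (metis dvd_add dvd_refl)
  next
    case False
    have "int (f i) = (int s + int i) mod int k" using False by (simp add: f_def zmod_int)
    thus ?thesis using False by (simp add: mod_eq_dvd_iff[symmetric])
  qed
  have icd: "(\<forall>i<k. p i \<in> V)" "inj_on p {..<k}"
    "\<forall>i<k. \<forall>j<k. E (p i) (p j) \<longleftrightarrow> (j = (i + 1) mod k \<or> i = (j + 1) mod k)"
    using ic by (auto simp: induced_cycle_def)
  have finj: "f i = f j \<Longrightarrow> i < k \<Longrightarrow> j < k \<Longrightarrow> i = j" for i j
  proof -
    assume h: "f i = f j" "i < k" "j < k"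
    have "int k dvd (int (f i) - int (f j) - (if rv then int j - int i else int i - int j))"
      using dvd_diff[OF fint[OF h(2)] fint[OF h(3)]] by (cases rv) (simp_all add: algebra_simps)
    hence "int k dvd (if rv then int j - int i else int i - int j)" using h(1) by simp
    thus "i = j" using eq_int[OF h(3) h(2)] eq_int[OF h(2) h(3)] by (auto split: if_splits)
  qed
  have fadj: "(f j = (f i + 1) mod k \<or> f i = (f j + 1) mod k) \<longleftrightarrow> (j = (i + 1) mod k \<or> i = (j + 1) mod k)"
    if "i < k" "j < k" for i j
  proof -
    have a1: "(f j = (f i + 1) mod k) \<longleftrightarrow> int k dvd (int (f j) - int (f i) - 1)"
      by (rule succ_int[OF fk fk])
    have a2: "(f i = (f j + 1) mod k) \<longleftrightarrow> int k dvd (int (f i) - int (f j) - 1)"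
      by (rule succ_int[OF fk fk])
    have b1: "(j = (i + 1) mod k) \<longleftrightarrow> int k dvd (int j - int i - 1)" by (rule succ_int[OF that(2,1)])
    have b2: "(i = (j + 1) mod k) \<longleftrightarrow> int k dvd (int i - int j - 1)" by (rule succ_int[OF that])
    show ?thesis
    proof (cases rv)
      case True
      have "int k dvd (int (f j) - int (f i) - 1) \<longleftrightarrow> int k dvd ((int s - int j) - (int s - int i) - 1)"
        by (rule dvd_shift) (use fint[OF that(2)] fint[OF that(1)] True in auto)
      moreover have "int k dvd (int (f i) - int (f j) - 1) \<longleftrightarrow> int k dvd ((int s - int i) - (int s - int j) - 1)"
        by (rule dvd_shift) (use fint[OF that(2)] fint[OF that(1)] True in auto)
      ultimately show ?thesis using a1 a2 b1 b2 by (auto simp: algebra_simps)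
    next
      case False
      have "int k dvd (int (f j) - int (f i) - 1) \<longleftrightarrow> int k dvd ((int s + int j) - (int s + int i) - 1)"
        by (rule dvd_shift) (use fint[OF that(2)] fint[OF that(1)] False in auto)
      moreover have "int k dvd (int (f i) - int (f j) - 1) \<longleftrightarrow> int k dvd ((int s + int i) - (int s + int j) - 1)"
        by (rule dvd_shift) (use fint[OF that(2)] fint[OF that(1)] False in auto)
      ultimately show ?thesis using a1 a2 b1 b2 by (auto simp: algebra_simps)
    qed
  qed
  show ?thesis unfolding induced_cycle_def cr
  proof (intro conjI allI impI)
    show "(p \<circ> f) i \<in> V" if "i < k" for i using icd(1) fk by simp
    show "inj_on (p \<circ> f) {..<k}"
      using icd(2) fk finj by (auto simp: inj_on_def)
    show "E ((p \<circ> f) i) ((p \<circ> f) j) = (j = (i + 1) mod k \<or> i = (j + 1) mod k)"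
      if "i < k" "j < k" for i j
      using icd(3) fk fadj[OF that] by simp
  qed
qed


lemma pX:
  assumes "persistent_graph V E" "a < b" "b < c" "c < d" "E a c" "E b d"
  shows "E a d"
proof -
  have sg: "simple_graph V E" using assms(1) unfolding persistent_graph_def by (elim conjE) assumption
  have xp: "\<forall>p q r s. p \<in> V \<longrightarrow> q \<in> V \<longrightarrow> r \<in> V \<longrightarrow> s \<in> V \<longrightarrow>
        p < q \<longrightarrow> q < r \<longrightarrow> r < s \<longrightarrow> E p r \<longrightarrow> E q s \<longrightarrow> E p s"
    using assms(1) unfolding persistent_graph_def by (elim conjE) assumption
  have "a \<in> V" "b \<in> V" "c \<in> V" "d \<in> V" using sg assms(5,6) unfolding simple_graph_def by blast+
  thus ?thesis using xp assms(2-6) by blast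
qed

lemma pBar:
  assumes "persistent_graph V E" "E a c" "a < c" "\<not> consecutive V a c"
  shows "\<exists>r\<in>V. a < r \<and> r < c \<and> E a r \<and> E r c"
proof -
  have "\<forall>p q. E p q \<longrightarrow> p < q \<longrightarrow> \<not> consecutive V p q \<longrightarrow> (\<exists>r\<in>V. p < r \<and> r < q \<and> E p r \<and> E r q)"
    using assms(1) unfolding persistent_graph_def by (elim conjE) assumption
  thus ?thesis using assms(2-4) by blast
qed

lemma pSG:
  assumes "persistent_graph V E"
  shows "finite V" "\<And>x y. E x y \<Longrightarrow> x \<in> V \<and> y \<in> V"
proof -
  have sg: "simple_graph V E" using assms(1) unfolding persistent_graph_def by (elim conjE) assumption
  thus "finite V" "\<And>x y. E x y \<Longrightarrow> x \<in> V \<and> y \<in> V" unfolding simple_graph_def by blast+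
qed

lemma pT:
  assumes pg: "persistent_graph V E"
  shows "E a c \<Longrightarrow> b \<in> V \<Longrightarrow> a < b \<Longrightarrow> b < c \<Longrightarrow>
    \<exists>u v. a \<le> u \<and> u < b \<and> b < v \<and> v \<le> c \<and> E u b \<and> E b v \<and> E u v"
proof (induction "card {x\<in>V. a \<le> x \<and> x \<le> c}" arbitrary: a c rule: less_induct)
  case less
  have fin: "finite V" and sym: "\<And>x y. E x y \<Longrightarrow> x \<in> V \<and> y \<in> V"
    using pSG[OF pg] by blast+
  have nc: "\<not> consecutive V a c" using less.prems by (auto simp: consecutive_def)
  have "a < c" using less.prems by simp
  then obtain r where r: "r \<in> V" "a < r" "r < c" "E a r" "E r c"
    using pBar[OF pg less.prems(1) _ nc] by blast
  consider "r = b" | "b < r" | "r < b" by fastforce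
  then show ?case
  proof cases
    case 1 thus ?thesis using r less.prems by (intro exI[of _ a] exI[of _ c]) auto
  next
    case 2
    have s1: "{x\<in>V. a \<le> x \<and> x \<le> r} \<subseteq> {x\<in>V. a \<le> x \<and> x \<le> c}"
      using r by auto
    have s2: "c \<in> {x\<in>V. a \<le> x \<and> x \<le> c}" "c \<notin> {x\<in>V. a \<le> x \<and> x \<le> r}"
      using r sym[OF less.prems(1)] by auto
    have "{x\<in>V. a \<le> x \<and> x \<le> r} \<subset> {x\<in>V. a \<le> x \<and> x \<le> c}"
      using s1 s2 by blast
    hence "card {x\<in>V. a \<le> x \<and> x \<le> r} < card {x\<in>V. a \<le> x \<and> x \<le> c}"
      using fin by (intro psubset_card_mono) auto
    from less.hyps[OF this r(4) less.prems(2,3) 2] obtain u v where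
      "a \<le> u \<and> u < b \<and> b < v \<and> v \<le> r \<and> E u b \<and> E b v \<and> E u v" by blast
    thus ?thesis using r by (intro exI[of _ u] exI[of _ v]) auto
  next
    case 3
    have s1: "{x\<in>V. r \<le> x \<and> x \<le> c} \<subseteq> {x\<in>V. a \<le> x \<and> x \<le> c}"
      using r by auto
    have s2: "a \<in> {x\<in>V. a \<le> x \<and> x \<le> c}" "a \<notin> {x\<in>V. r \<le> x \<and> x \<le> c}"
      using r sym[OF less.prems(1)] by auto
    have "{x\<in>V. r \<le> x \<and> x \<le> c} \<subset> {x\<in>V. a \<le> x \<and> x \<le> c}"
      using s1 s2 by blast
    hence "card {x\<in>V. r \<le> x \<and> x \<le> c} < card {x\<in>V. a \<le> x \<and> x \<le> c}"
      using fin by (intro psubset_card_mono) auto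
    from less.hyps[OF this r(5) less.prems(2) 3 less.prems(4)] obtain u v where
      "r \<le> u \<and> u < b \<and> b < v \<and> v \<le> c \<and> E u b \<and> E b v \<and> E u v" by blast
    thus ?thesis using r by (intro exI[of _ u] exI[of _ v]) auto
  qed
qed


lemma core:
  assumes pg: "persistent_graph V E" and k4: "k \<ge> 4" and ic: "induced_cycle V E k q"
    and mx: "\<forall>i<k. q i \<le> q 0" and y: "q 1 < q (k-1)"
  shows "q 2 < q 0 \<and> (\<forall>i. 2 \<le> i \<and> i + 1 < k \<longrightarrow> q (i+1) < q i) \<and> q 1 < q (k-1)"
proof -
  have sm: "(i + 1) mod k = (if i + 1 = k then 0 else i + 1)" if "i < k" for i
    using that by auto
  have A0: "E (q i) (q j) \<longleftrightarrow> (j = i+1 \<or> i = j+1 \<or> (i=0 \<and> j=k-1) \<or> (j=0 \<and> i=k-1))"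
    if "i < k" "j < k" for i j
    using ic that sm[OF that(1)] sm[OF that(2)] k4 unfolding induced_cycle_def by auto
  have A: "\<And>i j. i<k \<Longrightarrow> j<k \<Longrightarrow> E (q i) (q j) \<Longrightarrow> (j = i+1 \<or> i = j+1 \<or> (i=0 \<and> j=k-1) \<or> (j=0 \<and> i=k-1))"
    using A0 by blast
  have A': "\<And>i j. i<k \<Longrightarrow> j<k \<Longrightarrow> (j = i+1 \<or> i = j+1 \<or> (i=0 \<and> j=k-1) \<or> (j=0 \<and> i=k-1)) \<Longrightarrow> E (q i) (q j)"
    using A0 by blast
  have I: "\<And>i j. i<k \<Longrightarrow> j<k \<Longrightarrow> i \<noteq> j \<Longrightarrow> q i \<noteq> q j"
    using ic unfolding induced_cycle_def inj_on_def by blast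
  have Vq: "\<And>i. i<k \<Longrightarrow> q i \<in> V" using ic unfolding induced_cycle_def by blast
  have X: "\<And>a b c d. a<b \<Longrightarrow> b<c \<Longrightarrow> c<d \<Longrightarrow> E a c \<Longrightarrow> E b d \<Longrightarrow> E a d"
    using pX[OF pg] by blast
  have lt0: "q i < q 0" if "0<i" "i<k" for i
  proof -
    have "q i \<le> q 0" using mx that by simp
    moreover have "q i \<noteq> q 0" using I[of i 0] that by simp
    ultimately show ?thesis by simp
  qed
  have e10: "E (q 1) (q 0)" using A'[of 1 0] k4 by auto
  have ek0: "E (q (k-1)) (q 0)" using A'[of "k-1" 0] k4 by auto
  have e12: "E (q 1) (q 2)" using A'[of 1 2] k4 by simp
  have e23: "E (q 2) (q 3)" using A'[of 2 3] k4 by simp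
  have esuc: "\<And>i. i+1 < k \<Longrightarrow> E (q i) (q (i+1))" using A' by auto
  have mnd: "\<forall>i. i + d = k-1 \<longrightarrow> 2 \<le> i \<longrightarrow> q 1 < q i" for d
  proof (induction d)
    case 0 thus ?case using y by auto
  next
    case (Suc d)
    show ?case
    proof (intro allI impI)
      fix i assume h: "i + Suc d = k-1" "2 \<le> i"
      have ik: "i < k" "i + 1 < k" using h k4 by linarith+
      have h1: "q 1 < q (i+1)" using Suc.IH h ik by auto
      show "q 1 < q i"
      proof (rule ccontr)
        assume "\<not> q 1 < q i"
        hence "q i < q 1" using I[of i 1] h ik k4 by fastforce
        moreover have "q (i+1) < q 0" using lt0[of "i+1"] h ik by auto
        ultimately have "E (q i) (q 0)" using X[OF _ h1 _ esuc e10] h ik by auto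
        thus False using A[of i 0] h ik k4 by auto
      qed
    qed
  qed
  have mn: "q 1 < q i" if "2 \<le> i" "i < k" for i
    using mnd[of "k-1-i"] that by simp
  have q12: "q 1 < q 2" using mn k4 by auto
  have q20: "q 2 < q 0" using lt0 k4 by auto
  have notII: "\<not> (\<forall>i. 3 \<le> i \<longrightarrow> i < k \<longrightarrow> q 2 < q i)"
  proof
    assume II: "\<forall>i. 3 \<le> i \<longrightarrow> i < k \<longrightarrow> q 2 < q i"
    obtain u v where uv: "q 1 \<le> u" "u < q 2" "q 2 < v" "v \<le> q 0" "E u (q 2)" "E (q 2) v" "E u v"
      using pT[OF pg e10 Vq q12 q20] k4 by auto
    have "v \<noteq> q 0" using uv(6) A[of 2 0] k4 by auto
    hence v0: "v < q 0" using uv by auto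
    have vle: "v \<le> q (k-1)"
    proof (rule ccontr)
      assume "\<not> v \<le> q (k-1)"
      hence "E (q 2) (q 0)" using X[of "q 2" "q (k-1)" v "q 0"] II k4 v0 uv(6) ek0 by auto
      thus False using A[of 2 0] k4 by auto
    qed
    have E1v: "E (q 1) v"
    proof (cases "u = q 1")
      case True thus ?thesis using uv by simp
    next
      case False thus ?thesis using X[of "q 1" u "q 2" v] uv e12 k4 by auto
    qed
    have q3v: "q 3 < v"
    proof (rule ccontr)
      assume "\<not> q 3 < v"
      hence "v = q 3 \<or> v < q 3" by auto
      hence "E (q 1) (q 3)"
      proof
        assume "v = q 3" thus ?thesis using E1v by simp
      next
        assume "v < q 3" thus ?thesis using X[of "q 1" "q 2" v "q 3"] q12 uv E1v e23 k4 by auto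
      qed
      thus False using A[of 1 3] k4 by auto
    qed
    have all: "3 + n < k \<Longrightarrow> q (3 + n) < v" for n
    proof (induction n)
      case 0 thus ?case using q3v by simp
    next
      case (Suc n)
      have h: "q (3+n) < v" using Suc by auto
      show ?case
      proof (rule ccontr)
        assume "\<not> q (3 + Suc n) < v"
        hence "v = q (4+n) \<or> v < q (4+n)" by auto
        hence "E (q 2) (q (4+n))"
        proof
          assume "v = q (4+n)" thus ?thesis using uv by simp
        next
          assume "v < q (4+n)"
          thus ?thesis using X[of "q 2" "q (3+n)" v "q (4+n)"] II h uv esuc[of "3+n"] Suc.prems
            by (auto simp: add.commute)
        qed
        thus False using A[of 2 "4+n"] Suc.prems by auto
      qed
    qed
    have e: "3 + (k-4) = k - 1" and p: "3 + (k-4) < k" using k4 by arith+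
    have "q (3 + (k-4)) < v" by (rule all[OF p])
    hence "q (k-1) < v" unfolding e .
    thus False using vle by simp
  qed
  have qk2: "q (k-1) < q 2"
  proof (rule ccontr)
    assume "\<not> q (k-1) < q 2"
    hence g: "q 2 < q (k-1)" using I[of "k-1" 2] k4 by fastforce
    have bw: "\<forall>i. i + d = k-1 \<longrightarrow> 3 \<le> i \<longrightarrow> q 2 < q i" for d
    proof (induction d)
      case 0 thus ?case using g by auto
    next
      case (Suc d)
      show ?case
      proof (intro allI impI)
        fix i assume h: "i + Suc d = k-1" "3 \<le> i"
        have ik: "i < k" "i + 1 < k" using h k4 by linarith+
        have h1: "q 2 < q (i+1)" using Suc.IH h ik by auto
        show "q 2 < q i"
        proof (rule ccontr)
          assume "\<not> q 2 < q i"
          hence "q i < q 2" using I[of i 2] h ik k4 by fastforce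
          moreover have "q 1 < q i" using mn h ik by auto
          ultimately have "E (q 1) (q (i+1))" using X[of "q 1" "q i" "q 2" "q (i+1)"] h1 e12 esuc[of i] h ik by auto
          thus False using A[of 1 "i+1"] h ik k4 by auto
        qed
      qed
    qed
    have "\<forall>i. 3 \<le> i \<longrightarrow> i < k \<longrightarrow> q 2 < q i"
    proof (intro allI impI) fix i assume "3 \<le> i" "i < k" thus "q 2 < q i" using bw[of "k-1-i"] by simp qed
    thus False using notII by blast
  qed
  have P2: "\<forall>i. 2 < i \<longrightarrow> i < k \<longrightarrow> q i < q 2"
  proof -
    have bw: "\<forall>i. i + d = k-1 \<longrightarrow> 3 \<le> i \<longrightarrow> q i < q 2" for d
    proof (induction d)
      case 0 thus ?case using qk2 by auto
    next
      case (Suc d)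
      show ?case
      proof (intro allI impI)
        fix i assume h: "i + Suc d = k-1" "3 \<le> i"
        have ik: "i < k" "i + 1 < k" using h k4 by linarith+
        have h1: "q (i+1) < q 2" using Suc.IH h ik by auto
        show "q i < q 2"
        proof (rule ccontr)
          assume "\<not> q i < q 2"
          hence "q 2 < q i" using I[of i 2] h ik k4 by fastforce
          moreover have "q 1 < q (i+1)" using mn h ik by auto
          moreover have "E (q (i+1)) (q i)" using A'[of "i+1" i] h ik by auto
          ultimately have "E (q 1) (q i)" using X[of "q 1" "q (i+1)" "q 2" "q i"] h1 e12 h ik by auto
          thus False using A[of 1 i] h ik k4 by auto
        qed
      qed
    qed
    show ?thesis proof (intro allI impI) fix i assume "2 < i" "i < k" thus "q i < q 2" using bw[of "k-1-i"] by simp qed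
  qed
  have P: "2 + n + 1 < k \<Longrightarrow> \<forall>i. 2 + n < i \<longrightarrow> i < k \<longrightarrow> q i < q (2+n)" for n
  proof (induction n)
    case 0 thus ?case using P2 by simp
  next
    case (Suc n)
    define j where "j = 2 + n"
    have jk: "j + 2 < k" using Suc.prems j_def by simp
    have IH: "\<forall>i. j < i \<longrightarrow> i < k \<longrightarrow> q i < q j" using Suc j_def by simp
    have gs: "2 + Suc n = j + 1" using j_def by simp
    have ej: "E (q (j+1)) (q j)" using A'[of "j+1" j] jk by auto
    have qjj: "q (j+1) < q j" using IH jk by auto
    have qj0: "q j < q 0" using lt0 jk j_def by auto
    have c1: "q (k-1) < q (j+1)"
    proof (rule ccontr)
      assume "\<not> q (k-1) < q (j+1)"
      hence "q (j+1) < q (k-1)" using I[of "k-1" "j+1"] jk by fastforce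
      hence "E (q (j+1)) (q 0)" using X[of "q (j+1)" "q (k-1)" "q j" "q 0"] IH jk qj0 ej ek0 by auto
      thus False using A[of "j+1" 0] jk j_def by auto
    qed
    have bw: "\<forall>i. i + d = k-1 \<longrightarrow> j+2 \<le> i \<longrightarrow> q i < q (j+1)" for d
    proof (induction d)
      case 0 thus ?case using c1 by auto
    next
      case (Suc d)
      show ?case
      proof (intro allI impI)
        fix i assume h: "i + Suc d = k-1" "j+2 \<le> i"
        have ik: "i < k" "i + 1 < k" using h k4 by linarith+
        have h1: "q (i+1) < q (j+1)" using Suc.IH h ik by auto
        show "q i < q (j+1)"
        proof (rule ccontr)
          assume "\<not> q i < q (j+1)"
          hence "q (j+1) < q i" using I[of i "j+1"] h ik jk by fastforce
          moreover have "q i < q j" using IH h ik by auto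
          moreover have "E (q (i+1)) (q i)" using A'[of "i+1" i] h ik by auto
          ultimately have "E (q (i+1)) (q j)" using X[of "q (i+1)" "q (j+1)" "q i" "q j"] h1 ej by auto
          thus False using A[of "i+1" j] h ik jk j_def by auto
        qed
      qed
    qed
    have "\<forall>i. j+1 < i \<longrightarrow> i < k \<longrightarrow> q i < q (j+1)"
    proof (intro allI impI) fix i assume "j+1 < i" "i < k" thus "q i < q (j+1)" using bw[of "k-1-i"] by simp qed
    thus ?case using gs by simp
  qed
  have dec: "\<forall>i. 2 \<le> i \<and> i + 1 < k \<longrightarrow> q (i+1) < q i"
  proof (intro allI impI)
    fix i assume h: "2 \<le> i \<and> i + 1 < k"
    have ik: "i < k" "i + 1 < k" using h k4 by linarith+
    obtain n where "i = 2 + n" using h le_Suc_ex by blast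
    thus "q (i+1) < q i" using P[of n] h ik by auto
  qed
  show ?thesis by (rule conjI[OF q20 conjI[OF dec y]])
qed


theorem proposition4:
  fixes V :: "'a::linorder set" and E :: "'a \<Rightarrow> 'a \<Rightarrow> bool"
    and k :: nat and p :: "nat \<Rightarrow> 'a"
  assumes "persistent_graph V E"
    and "k \<ge> 4"
    and "induced_cycle V E k p"
  shows "\<exists>s<k. \<exists>rv. let q = cyc_reindex k s rv p in
           q 2 < q 0 \<and> (\<forall>i. 2 \<le> i \<and> i + 1 < k \<longrightarrow> q (i + 1) < q i) \<and> q 1 < q (k - 1)"
proof -
  have k0: "k > 0" using assms(2) by simp
  have fin: "finite (p ` {..<k})" by simp
  have ne: "p ` {..<k} \<noteq> {}" using k0 by auto
  obtain iM where iM: "iM < k" "p iM = Max (p ` {..<k})"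
    using Max_in[OF fin ne] by auto
  have iMmax: "p i \<le> p iM" if "i < k" for i
    using iM(2) Max_ge[OF fin] that by auto
  define qF where "qF = cyc_reindex k iM False p"
  define qT where "qT = cyc_reindex k iM True p"
  have icF: "induced_cycle V E k qF" unfolding qF_def by (rule reindex_induced[OF assms(3) k0])
  have icT: "induced_cycle V E k qT" unfolding qT_def by (rule reindex_induced[OF assms(3) k0])
  have rng: "cyc_reindex k iM rv p i \<le> p iM" for rv i
    unfolding cyc_reindex_def using iMmax k0 by auto
  have z: "cyc_reindex k iM rv p 0 = p iM" for rv
    unfolding cyc_reindex_def using iM(1) by auto
  have mxF: "\<forall>i<k. qF i \<le> qF 0" using rng z unfolding qF_def by simp
  have mxT: "\<forall>i<k. qT i \<le> qT 0" using rng z unfolding qT_def by simp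
  have km: "(k - 1) mod k = k - 1" "1 mod k = 1" "k - (k - 1) = 1" using assms(2) by auto
  have sw1: "qF 1 = qT (k-1)" unfolding qF_def qT_def cyc_reindex_def using km by simp
  have sw2: "qF (k-1) = qT 1" unfolding qF_def qT_def cyc_reindex_def using km by (simp add: add.commute)
  have injF: "inj_on qF {..<k}" using icF unfolding induced_cycle_def by (elim conjE) assumption
  have ks: "1 \<noteq> k - 1" "1 < k" "k - 1 < k" using assms(2) by auto
  have neq: "qF 1 \<noteq> qF (k-1)"
    using inj_on_eq_iff[OF injF, of 1 "k-1"] ks by simp
  show ?thesis
  proof (cases "qF 1 < qF (k-1)")
    case True
    have c: "qF 2 < qF 0 \<and> (\<forall>i. 2 \<le> i \<and> i + 1 < k \<longrightarrow> qF (i+1) < qF i) \<and> qF 1 < qF (k-1)"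
      by (rule core[OF assms(1,2) icF mxF True])
    show ?thesis using c iM(1) unfolding qF_def Let_def by blast
  next
    case False
    hence lt: "qT 1 < qT (k-1)" using neq sw1 sw2 by auto
    have c: "qT 2 < qT 0 \<and> (\<forall>i. 2 \<le> i \<and> i + 1 < k \<longrightarrow> qT (i+1) < qT i) \<and> qT 1 < qT (k-1)"
      by (rule core[OF assms(1,2) icT mxT lt])
    show ?thesis using c iM(1) unfolding qT_def Let_def by blast
  qed
qed

end
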